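(* With the notation of the context, for all fixed frequencies, $$|S^{\rm good}_{kk_2}|\lesssim1,\qquad |S^{\rm good}_{k_1k_3}|\lesssim1,\qquad |S^{\rm bad}_{kk_2}|\lesssim|k+k_2|^{1-\frac\alpha2}+1,\qquad |S^{\rm bad}_{k_1k_3}|\lesssim|k_1+k_3|^{1-\frac\alpha2}+1.$$
   Context: Fix $\alpha\in(1,2)$, dyadic numbers $1\le N_1,N_2,N_3\le N$, a real number $m$ and a constant $C_0>0$. Let $S$ be the set of $(k,k_1,k_2,k_3)\in\mathbb Z^4$ with $k=k_1-k_2+k_3$, $k_2\notin\{k_1,k_3\}$, $\big||k_1|^\alpha-|k_2|^\alpha+|k_3|^\alpha-|k|^\alpha-m\big|\le C_0$, $|k|\le N$ and $|k_j|\le N_j$ for $j=1,2,3$. Let $S_{k_1k_3}=\{(k,k_2):(k,k_1,k_2,k_3)\in S\}$ and $S_{kk_2}=\{(k_1,k_3):(k,k_1,k_2,k_3)\in S\}$. Fix a small absolute constant $c\in(0,1)$ and set $S^{\rm bad}_{k_1k_3}=\{(k,k_2)\in S_{k_1k_3}:|2k-(k_1+k_3)|<c|k_1+k_3|\}$, $S^{\rm good}_{k_1k_3}=S_{k_1k_3}\setminus S^{\rm bad}_{k_1k_3}$, $S^{\rm bad}_{kk_2}=\{(k_1,k_3)\in S_{kk_2}:|2k_1-(k+k_2)|<c|k+k_2|\}$, $S^{\rm good}_{kk_2}=S_{kk_2}\setminus S^{\rm bad}_{kk_2}$. $|A|$ is cardinality. $A\lesssim B$ means $A\le CB$ with $C$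 depending only on $\alpha$, $c$ and $C_0$. *)

theory Defs
  imports Complex_Main
begin

definition dyadic :: "nat \<Rightarrow> bool" where
  "dyadic N \<longleftrightarrow> (\<exists>j::nat. N = 2 ^ j)"

definition Sset :: "real \<Rightarrow> real \<Rightarrow> real \<Rightarrow> nat \<Rightarrow> nat \<Rightarrow> nat \<Rightarrow> nat
    \<Rightarrow> (int \<times> int \<times> int \<times> int) set" where
  "Sset \<alpha> m C0 N N1 N2 N3 = {(k,k1,k2,k3). k = k1 - k2 + k3 \<and> k2 \<noteq> k1 \<and> k2 \<noteq> k3 \<and>
     \<bar>\<bar>real_of_int k1\<bar> powr \<alpha> - \<bar>real_of_int k2\<bar> powr \<alpha> + \<bar>real_of_int k3\<bar> powr \<alpha>
        - \<bar>real_of_int k\<bar> powr \<alpha> - m\<bar> \<le> C0 \<and>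
     \<bar>k\<bar> \<le> int N \<and> \<bar>k1\<bar> \<le> int N1 \<and> \<bar>k2\<bar> \<le> int N2 \<and> \<bar>k3\<bar> \<le> int N3}"

definition S_k1k3 where
  "S_k1k3 \<alpha> m C0 N N1 N2 N3 k1 k3 = {(k,k2). (k,k1,k2,k3) \<in> Sset \<alpha> m C0 N N1 N2 N3}"

definition S_kk2 where
  "S_kk2 \<alpha> m C0 N N1 N2 N3 k k2 = {(k1,k3). (k,k1,k2,k3) \<in> Sset \<alpha> m C0 N N1 N2 N3}"

definition S_k1k3_bad where
  "S_k1k3_bad \<alpha> c m C0 N N1 N2 N3 k1 k3 = {(k,k2) \<in> S_k1k3 \<alpha> m C0 N N1 N2 N3 k1 k3.
      real_of_int \<bar>2*k - (k1+k3)\<bar> < c * real_of_int \<bar>k1+k3\<bar>}"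

definition S_k1k3_good where
  "S_k1k3_good \<alpha> c m C0 N N1 N2 N3 k1 k3 =
     S_k1k3 \<alpha> m C0 N N1 N2 N3 k1 k3 - S_k1k3_bad \<alpha> c m C0 N N1 N2 N3 k1 k3"

definition S_kk2_bad where
  "S_kk2_bad \<alpha> c m C0 N N1 N2 N3 k k2 = {(k1,k3) \<in> S_kk2 \<alpha> m C0 N N1 N2 N3 k k2.
      real_of_int \<bar>2*k1 - (k+k2)\<bar> < c * real_of_int \<bar>k+k2\<bar>}"

definition S_kk2_good where
  "S_kk2_good \<alpha> c m C0 N N1 N2 N3 k k2 =
     S_kk2 \<alpha> m C0 N N1 N2 N3 k k2 - S_kk2_bad \<alpha> c m C0 N N1 N2 N3 k k2"

end

theory Submission
  imports Defs
begin


lemma inner_ineq: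
  fixes a b S \<alpha> :: real
  assumes "1 < \<alpha>" "\<alpha> < 2" "0 < b" "b \<le> a" "a \<le> S"
  shows "a powr (\<alpha>-1) - b powr (\<alpha>-1) \<ge> (\<alpha>-1) * S powr (\<alpha>-2) * (a-b)"
proof -
  define f where "f t = t powr (\<alpha>-1) - (\<alpha>-1) * S powr (\<alpha>-2) * t" for t
  have "f b \<le> f a"
  proof (rule DERIV_nonneg_imp_increasing_open[OF assms(4)])
    fix t assume t: "b < t" "t < a"
    have "DERIV f t :> (\<alpha>-1) * t powr (\<alpha>-1-1) - (\<alpha>-1) * S powr (\<alpha>-2) * 1"
      unfolding f_def using t assms
      by (auto intro!: derivative_eq_intros)
    moreover have "t powr (\<alpha>-2) \<ge> S powr (\<alpha>-2)"
      using t assms by (intro powr_mono2') auto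
    then have "(\<alpha>-1) * (t powr (\<alpha>-2) - S powr (\<alpha>-2)) \<ge> 0"
      using assms by simp
    ultimately show "\<exists>y. DERIV f t :> y \<and> y \<ge> 0"
      by (intro exI[of _ "(\<alpha>-1) * t powr (\<alpha>-1-1) - (\<alpha>-1) * S powr (\<alpha>-2) * 1"]) (auto simp: algebra_simps)
  next
    show "continuous_on {b..a} f" unfolding f_def using assms
      by (auto intro!: continuous_intros)
  qed
  then show ?thesis unfolding f_def by (simp add: algebra_simps)
qed

lemma convex_step:
  fixes S w w' \<alpha> :: real
  assumes "1 < \<alpha>" "\<alpha> < 2" "0 < S" "0 \<le> w" "w \<le> w'" "w' \<le> S"
  shows "((S+w')/2) powr \<alpha> + ((S-w')/2) powr \<alpha> - (((S+w)/2) powr \<alpha> + ((S-w)/2) powr \<alpha>)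
     \<ge> \<alpha>*(\<alpha>-1)*S powr (\<alpha>-2)/4 * (w'^2 - w^2)"
proof -
  define \<kappa> where "\<kappa> = \<alpha>*(\<alpha>-1)*S powr (\<alpha>-2)/4"
  define Q where "Q t = ((S+t)/2) powr \<alpha> + ((S-t)/2) powr \<alpha> - \<kappa> * t^2" for t
  have "Q w \<le> Q w'"
  proof (rule DERIV_nonneg_imp_increasing_open[OF assms(5)])
    fix t assume t: "w < t" "t < w'"
    have D: "DERIV Q t :> \<alpha> * ((S+t)/2) powr (\<alpha>-1) * (1/2) + \<alpha> * ((S-t)/2) powr (\<alpha>-1) * (-1/2) - \<kappa> * (2*t)"
      unfolding Q_def using t assms
      by (auto intro!: derivative_eq_intros simp: field_simps)
    have "((S+t)/2) powr (\<alpha>-1) - ((S-t)/2) powr (\<alpha>-1) \<ge> (\<alpha>-1) * S powr (\<alpha>-2) * ((S+t)/2 - (S-t)/2)"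
      using t assms by (intro inner_ineq) auto
    moreover have "(S+t)/2 - (S-t)/2 = t" by (simp add: field_simps)
    ultimately have "((S+t)/2) powr (\<alpha>-1) - ((S-t)/2) powr (\<alpha>-1) \<ge> (\<alpha>-1) * S powr (\<alpha>-2) * t" by simp
    then have "\<alpha>/2 * (((S+t)/2) powr (\<alpha>-1) - ((S-t)/2) powr (\<alpha>-1)) \<ge> \<alpha>/2 * ((\<alpha>-1) * S powr (\<alpha>-2) * t)"
      using assms by (intro mult_left_mono) auto
    then have "\<alpha> * ((S+t)/2) powr (\<alpha>-1) * (1/2) + \<alpha> * ((S-t)/2) powr (\<alpha>-1) * (-1/2) - \<kappa> * (2*t) \<ge> 0"
      unfolding \<kappa>_def by (simp add: field_simps)
    then show "\<exists>y. DERIV Q t :> y \<and> y \<ge> 0" using D by blast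
  next
    show "continuous_on {w..w'} Q" unfolding Q_def using assms
      by (auto intro!: continuous_intros continuous_on_powr')
  qed
  then have "\<kappa> * (w'^2 - w^2) \<le> ((S+w')/2) powr \<alpha> + ((S-w')/2) powr \<alpha> - (((S+w)/2) powr \<alpha> + ((S-w)/2) powr \<alpha>)"
    unfolding Q_def by (simp add: algebra_simps)
  then show ?thesis unfolding \<kappa>_def .
qed

definition phi :: "real \<Rightarrow> real \<Rightarrow> real \<Rightarrow> real" where
  "phi \<alpha> S w = ((S+w)/2) powr \<alpha> + (\<bar>S-w\<bar>/2) powr \<alpha>"

lemma superadd:
  fixes a b \<alpha> :: real
  assumes "1 \<le> \<alpha>" "0 \<le> a" "0 \<le> b"
  shows "a powr \<alpha> + b powr \<alpha> \<le> (a+b) powr \<alpha>"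
proof -
  have ea: "a powr \<alpha> = a * a powr (\<alpha>-1)"
    using assms powr_add[of a 1 "\<alpha>-1"] by simp
  have eb: "b powr \<alpha> = b * b powr (\<alpha>-1)"
    using assms powr_add[of b 1 "\<alpha>-1"] by simp
  have eab: "(a+b) powr \<alpha> = (a+b) * (a+b) powr (\<alpha>-1)"
    using assms powr_add[of "a+b" 1 "\<alpha>-1"] by simp
  have "a * a powr (\<alpha>-1) \<le> a * (a+b) powr (\<alpha>-1)"
    using assms by (intro mult_left_mono powr_mono2) auto
  moreover have "b * b powr (\<alpha>-1) \<le> b * (a+b) powr (\<alpha>-1)"
    using assms by (intro mult_left_mono powr_mono2) auto
  ultimately show ?thesis unfolding ea eb eab by (simp add: algebra_simps)
qed

lemma reg2_step:
  fixes S w w' \<alpha> :: real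
  assumes "1 < \<alpha>" "0 \<le> S" "S \<le> w" "w \<le> w'"
  shows "phi \<alpha> S w' - phi \<alpha> S w \<ge> ((w'-w)/2) powr \<alpha>"
proof -
  have "((S+w)/2) powr \<alpha> + ((w'-w)/2) powr \<alpha> \<le> ((S+w)/2 + (w'-w)/2) powr \<alpha>"
    using assms by (intro superadd) auto
  also have "(S+w)/2 + (w'-w)/2 = (S+w')/2" by (simp add: field_simps)
  finally have 1: "((S+w)/2) powr \<alpha> + ((w'-w)/2) powr \<alpha> \<le> ((S+w')/2) powr \<alpha>" .
  have 2: "(\<bar>S-w\<bar>/2) powr \<alpha> \<le> (\<bar>S-w'\<bar>/2) powr \<alpha>"
    using assms by (intro powr_mono2) auto
  show ?thesis using 1 2 unfolding phi_def by simp
qed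

lemma reg1_step:
  fixes S w w' \<alpha> :: real
  assumes "1 < \<alpha>" "\<alpha> < 2" "0 < S" "0 \<le> w" "w \<le> w'" "w' \<le> S"
  shows "phi \<alpha> S w' - phi \<alpha> S w \<ge> \<alpha>*(\<alpha>-1)*S powr (\<alpha>-2)/4 * (w'^2 - w^2)"
proof -
  have "\<bar>S-w\<bar> = S - w" "\<bar>S-w'\<bar> = S - w'" using assms by auto
  then show ?thesis unfolding phi_def using convex_step[OF assms] by simp
qed

lemma phi_mono:
  fixes S w w' \<alpha> :: real
  assumes "1 < \<alpha>" "\<alpha> < 2" "0 \<le> S" "0 \<le> w" "w \<le> w'"
  shows "phi \<alpha> S w \<le> phi \<alpha> S w'"
proof -
  have A: "phi \<alpha> S u \<le> phi \<alpha> S u'" if "S \<le> u" "u \<le> u'" for u u'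
    using reg2_step[OF assms(1) assms(3) that] by (smt (verit) powr_ge_zero)
  have B: "phi \<alpha> S u \<le> phi \<alpha> S u'" if "0 < S" "0 \<le> u" "u \<le> u'" "u' \<le> S" for u u'
  proof -
    have "0 \<le> \<alpha>*(\<alpha>-1)*S powr (\<alpha>-2)/4" using assms by simp
    moreover have "0 \<le> u'^2 - u^2" using that by (simp add: power_mono)
    ultimately have "0 \<le> \<alpha>*(\<alpha>-1)*S powr (\<alpha>-2)/4 * (u'^2 - u^2)" by simp
    then show ?thesis using reg1_step[OF assms(1,2) that] by simp
  qed
  show ?thesis
  proof (cases "S = 0")
    case True then show ?thesis using A assms by auto
  next
    case False
    then have S: "0 < S" using assms by simp
    consider "w' \<le> S" | "S \<le> w" | "w < S" "S < w'" by linarith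
    then show ?thesis
    proof cases
      case 1 then show ?thesis using B[OF S assms(4,5)] by simp
    next
      case 2 then show ?thesis using A assms by simp
    next
      case 3
      have "phi \<alpha> S w \<le> phi \<alpha> S S" using B[OF S assms(4)] 3 by simp
      also have "\<dots> \<le> phi \<alpha> S w'" using A 3 by simp
      finally show ?thesis .
    qed
  qed
qed

lemma reg1_bound:
  fixes S w w' \<alpha> c D :: real
  assumes "1 < \<alpha>" "\<alpha> < 2" "1 \<le> S" "0 < c" "c*S \<le> w" "w \<le> w'" "w' \<le> S"
    and "phi \<alpha> S w' - phi \<alpha> S w \<le> D"
  shows "w' - w \<le> 2*D/(\<alpha>*(\<alpha>-1)*c)"
proof -
  define \<kappa> where "\<kappa> = \<alpha>*(\<alpha>-1)*S powr (\<alpha>-2)/4"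
  have k0: "0 \<le> \<kappa>" unfolding \<kappa>_def using assms by simp
  have w0: "0 \<le> w" using assms by (smt (verit) mult_nonneg_nonneg)
  have 1: "\<kappa> * (w'^2 - w^2) \<le> D"
    using reg1_step[OF assms(1,2) _ w0 assms(6,7)] assms(3,8) unfolding \<kappa>_def by simp
  have "w'^2 - w^2 = (w'-w)*(w'+w)" by (simp add: power2_eq_square algebra_simps)
  moreover have "(w'-w)*(2*c*S) \<le> (w'-w)*(w'+w)"
    using assms by (intro mult_left_mono) auto
  ultimately have "\<kappa> * ((w'-w)*(2*c*S)) \<le> \<kappa> * (w'^2 - w^2)"
    using k0 by (simp add: mult_left_mono)
  also have "\<kappa> * ((w'-w)*(2*c*S)) = (\<alpha>*(\<alpha>-1)*c/2) * (S powr (\<alpha>-2) * S) * (w'-w)"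
    unfolding \<kappa>_def by (simp add: field_simps)
  also have "S powr (\<alpha>-2) * S = S powr (\<alpha>-1)"
    using assms powr_add[of S "\<alpha>-2" 1] by simp
  finally have 2: "(\<alpha>*(\<alpha>-1)*c/2) * S powr (\<alpha>-1) * (w'-w) \<le> D" using 1 by simp
  have "1 \<le> S powr (\<alpha>-1)" using assms by (simp add: ge_one_powr_ge_zero)
  then have "(\<alpha>*(\<alpha>-1)*c/2) * (w'-w) \<le> (\<alpha>*(\<alpha>-1)*c/2) * S powr (\<alpha>-1) * (w'-w)"
    using assms by (intro mult_right_mono) (auto simp: mult_left_mono)
  with 2 have 3: "(\<alpha>*(\<alpha>-1)*c/2) * (w'-w) \<le> D" by simp
  define m where "m = \<alpha>*(\<alpha>-1)*c"
  have m0: "0 < m" unfolding m_def using assms by simp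
  have "(w'-w) * m \<le> 2*D" using 3 unfolding m_def by (simp add: algebra_simps)
  then have "w'-w \<le> 2*D/m" using m0 by (simp add: pos_le_divide_eq)
  then show ?thesis unfolding m_def .
qed

lemma reg2_bound:
  fixes S w w' \<alpha> D :: real
  assumes "1 < \<alpha>" "0 \<le> S" "S \<le> w" "w \<le> w'" "0 \<le> D"
    and "phi \<alpha> S w' - phi \<alpha> S w \<le> D"
  shows "w' - w \<le> 2*D + 2"
proof (cases "(w'-w)/2 \<ge> 1")
  case True
  have "(w'-w)/2 = ((w'-w)/2) powr 1" using True by simp
  also have "\<dots> \<le> ((w'-w)/2) powr \<alpha>" using True assms by (intro powr_mono) auto
  also have "\<dots> \<le> D" using reg2_step[OF assms(1-4)] assms(6) by simp
  finally show ?thesis by simp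
next
  case False then show ?thesis using assms by simp
qed

lemma bad_bound:
  fixes S w w' \<alpha> D :: real
  assumes "1 < \<alpha>" "\<alpha> < 2" "0 < S" "0 \<le> w" "w \<le> w'" "w' \<le> S" "0 \<le> D"
    and "phi \<alpha> S w' - phi \<alpha> S w \<le> D"
  shows "w' - w \<le> sqrt (4*D/(\<alpha>*(\<alpha>-1))) * S powr (1 - \<alpha>/2)"
proof -
  define \<kappa> where "\<kappa> = \<alpha>*(\<alpha>-1)*S powr (\<alpha>-2)/4"
  have k0: "0 < \<kappa>" unfolding \<kappa>_def using assms by simp
  have 1: "\<kappa> * (w'^2 - w^2) \<le> D"
    using reg1_step[OF assms(1-6)] assms(8) unfolding \<kappa>_def by simp
  have "w*w \<le> w*w'" using assms by (simp add: mult_left_mono)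
  then have "(w'-w)^2 \<le> w'^2 - w^2" using assms by (simp add: power2_eq_square algebra_simps)
  then have "\<kappa> * (w'-w)^2 \<le> D" using 1 k0 by (smt (verit) mult_left_mono)
  then have 2: "(w'-w)^2 \<le> D / \<kappa>" using k0 by (simp add: field_simps)
  have e: "S powr (\<alpha>-2) * S powr (2-\<alpha>) = 1" using assms by (simp add: powr_add[symmetric])
  have "D / \<kappa> = 4*D/(\<alpha>*(\<alpha>-1)) * S powr (2-\<alpha>)"
    unfolding \<kappa>_def using assms by (simp add: field_simps e)
  with 2 have "sqrt ((w'-w)^2) \<le> sqrt (4*D/(\<alpha>*(\<alpha>-1)) * S powr (2-\<alpha>))"
    by (simp only: real_sqrt_le_iff)
  also have "\<dots> = sqrt (4*D/(\<alpha>*(\<alpha>-1))) * S powr (1 - \<alpha>/2)"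
  proof -
    have "(2-\<alpha>)/2 = 1 - \<alpha>/2" by (simp add: field_simps)
    then have "S powr (1 - \<alpha>/2) = sqrt (S powr (2-\<alpha>))"
      using powr_half_sqrt_powr[of S "2-\<alpha>"] assms by (metis less_imp_le)
    then show ?thesis by (simp only: real_sqrt_mult[symmetric])
  qed
  finally show ?thesis using assms by simp
qed

lemma phi_id:
  fixes s x \<alpha> :: real
  shows "\<bar>x\<bar> powr \<alpha> + \<bar>s - x\<bar> powr \<alpha> = phi \<alpha> \<bar>s\<bar> \<bar>2*x - s\<bar>"
proof -
  have "((\<bar>s\<bar> + \<bar>2*x - s\<bar>)/2 = \<bar>x\<bar> \<and> \<bar>\<bar>s\<bar> - \<bar>2*x - s\<bar>\<bar>/2 = \<bar>s - x\<bar>) \<or>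
        ((\<bar>s\<bar> + \<bar>2*x - s\<bar>)/2 = \<bar>s - x\<bar> \<and> \<bar>\<bar>s\<bar> - \<bar>2*x - s\<bar>\<bar>/2 = \<bar>x\<bar>)"
    by (cases "0 \<le> s"; cases "s \<le> 2*x"; cases "0 \<le> x"; cases "x \<le> s"; simp add: abs_if field_simps)
  then show ?thesis unfolding phi_def by auto
qed

lemma card_diam:
  fixes W :: "int set" and L :: real
  assumes "\<And>a b. a \<in> W \<Longrightarrow> b \<in> W \<Longrightarrow> a \<le> b \<Longrightarrow> real_of_int (b - a) \<le> L" "0 \<le> L"
  shows "finite W \<and> real (card W) \<le> 2*L + 1"
proof (cases "W = {}")
  case True then show ?thesis using assms by simp
next
  case False
  then obtain a where a: "a \<in> W" by blast
  have sub: "W \<subseteq> {a - \<lfloor>L\<rfloor>..a + \<lfloor>L\<rfloor>}"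
  proof
    fix b assume b: "b \<in> W"
    have "\<bar>b - a\<bar> \<le> \<lfloor>L\<rfloor>"
    proof (cases "a \<le> b")
      case True
      then have "real_of_int (b - a) \<le> L" using assms a b by blast
      then show ?thesis using True by (simp add: le_floor_iff)
    next
      case False
      then have "real_of_int (a - b) \<le> L" using assms a b by simp
      then show ?thesis using False by (simp add: le_floor_iff)
    qed
    then show "b \<in> {a - \<lfloor>L\<rfloor>..a + \<lfloor>L\<rfloor>}" by auto
  qed
  then have fin: "finite W" by (rule finite_subset) simp
  have "card W \<le> card {a - \<lfloor>L\<rfloor>..a + \<lfloor>L\<rfloor>}" using sub by (intro card_mono) auto
  also have "\<dots> = nat (2*\<lfloor>L\<rfloor> + 1)" by simp
  finally have "real (card W) \<le> real (nat (2*\<lfloor>L\<rfloor> + 1))" by linarith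
  also have "\<dots> = 2*real_of_int \<lfloor>L\<rfloor> + 1" using assms by simp
  also have "\<dots> \<le> 2*L + 1" by linarith
  finally show ?thesis using fin by simp
qed

lemma card_preimage:
  fixes T W :: "int set" and s :: int
  assumes "finite W" "\<And>x. x \<in> T \<Longrightarrow> \<bar>2*x - s\<bar> \<in> W"
  shows "finite T \<and> card T \<le> 2 * card W"
proof -
  have sub: "T \<subseteq> (\<lambda>w. (s+w) div 2) ` W \<union> (\<lambda>w. (s-w) div 2) ` W"
  proof
    fix x assume x: "x \<in> T"
    show "x \<in> (\<lambda>w. (s+w) div 2) ` W \<union> (\<lambda>w. (s-w) div 2) ` W"
    proof (cases "0 \<le> 2*x - s")
      case True
      then have "x = (s + \<bar>2*x - s\<bar>) div 2" by simp
      then show ?thesis using assms(2)[OF x] by blast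
    next
      case False
      then have "x = (s - \<bar>2*x - s\<bar>) div 2" by simp
      then show ?thesis using assms(2)[OF x] by blast
    qed
  qed
  have "card T \<le> card ((\<lambda>w. (s+w) div 2) ` W \<union> (\<lambda>w. (s-w) div 2) ` W)"
    using sub assms by (intro card_mono) auto
  also have "\<dots> \<le> card ((\<lambda>w. (s+w) div 2) ` W) + card ((\<lambda>w. (s-w) div 2) ` W)"
    by (rule card_Un_le)
  also have "\<dots> \<le> card W + card W" by (intro add_mono card_image_le assms(1))
  finally show ?thesis using sub assms(1) finite_subset by auto
qed


lemma good_core:
  fixes \<alpha> c C0 B :: real and s :: int
  assumes "1 < \<alpha>" "\<alpha> < 2" "0 < c" "0 < C0"
  defines "T \<equiv> {x::int. \<bar>phi \<alpha> (of_int \<bar>s\<bar>) (of_int \<bar>2*x - s\<bar>) - B\<bar> \<le> C0 \<and>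
                  c * of_int \<bar>s\<bar> \<le> of_int \<bar>2*x - s\<bar>}"
  shows "finite T \<and> real (card T) \<le> 2*(2*(4*C0/(\<alpha>*(\<alpha>-1)*c) + 4*C0 + 2) + 1)"
proof -
  define Lg where "Lg = 4*C0/(\<alpha>*(\<alpha>-1)*c) + 4*C0 + 2"
  define W where "W = {w::int. 0 \<le> w \<and> \<bar>phi \<alpha> (of_int \<bar>s\<bar>) (of_int w) - B\<bar> \<le> C0 \<and>
                  c * of_int \<bar>s\<bar> \<le> of_int w}"
  define S where "S = real_of_int \<bar>s\<bar>"
  have S0: "0 \<le> S" unfolding S_def by simp
  have S1: "S = 0 \<or> 1 \<le> S" unfolding S_def by (cases "s = 0") auto
  have A0: "0 \<le> 4*C0/(\<alpha>*(\<alpha>-1)*c)" using assms by simp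
  have diam: "real_of_int (b - a) \<le> Lg" if ab: "a \<in> W" "b \<in> W" "a \<le> b" for a b
  proof -
    define u where "u = real_of_int a"
    define u' where "u' = real_of_int b"
    have aW: "0 \<le> u" "\<bar>phi \<alpha> S u - B\<bar> \<le> C0" "c*S \<le> u"
      using ab(1) unfolding W_def u_def S_def by simp_all
    have bW: "\<bar>phi \<alpha> S u' - B\<bar> \<le> C0"
      using ab(2) unfolding W_def u'_def S_def by simp_all
    have u0: "0 \<le> u" "u \<le> u'" "c*S \<le> u" using aW ab(3) unfolding u_def u'_def by simp_all
    have ph: "phi \<alpha> S u' - phi \<alpha> S u \<le> 2*C0" using aW(2) bW by (simp add: abs_le_iff)
    have "u' - u \<le> Lg"
    proof -
      consider "u' \<le> S" | "S \<le> u" | "u < S" "S < u'" by linarith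
      then show ?thesis
      proof cases
        case 1
        show ?thesis
        proof (cases "S = 0")
          case True then show ?thesis using u0 1 A0 assms(4) unfolding Lg_def by linarith
        next
          case False
          then have "1 \<le> S" using S1 by simp
          then have "u' - u \<le> 2*(2*C0)/(\<alpha>*(\<alpha>-1)*c)"
            using reg1_bound[OF assms(1,2) _ assms(3) u0(3) u0(2) 1 ph] by simp
          then show ?thesis using assms unfolding Lg_def by simp
        qed
      next
        case 2
        have "u' - u \<le> 2*(2*C0) + 2" using reg2_bound[OF assms(1) S0 2 u0(2) _ ph] assms by simp
        then show ?thesis using A0 unfolding Lg_def by simp
      next
        case 3
        have m1: "phi \<alpha> S u \<le> phi \<alpha> S S" using phi_mono[OF assms(1,2) S0 u0(1)] 3 by simp
        have m2: "phi \<alpha> S S \<le> phi \<alpha> S u'" using phi_mono[OF assms(1,2) S0 S0] 3 by simp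
        have "1 \<le> S" using S1 3 u0 by auto
        then have "S - u \<le> 2*(2*C0)/(\<alpha>*(\<alpha>-1)*c)"
          using reg1_bound[OF assms(1,2) _ assms(3) u0(3), of S "2*C0"] 3 ph m2 by simp
        moreover have "u' - S \<le> 2*(2*C0) + 2"
          using reg2_bound[OF assms(1) S0 order_refl, of u' "2*C0"] 3 ph m1 assms by simp
        ultimately show ?thesis unfolding Lg_def by simp
      qed
    qed
    then show ?thesis unfolding u_def u'_def by simp
  qed
  have L0: "0 \<le> Lg" unfolding Lg_def using A0 assms by simp
  from card_diam[OF diam L0] have W: "finite W" "real (card W) \<le> 2*Lg+1" by auto
  have "finite T \<and> card T \<le> 2 * card W"
  proof (rule card_preimage[OF W(1)])
    fix x assume "x \<in> T" then show "\<bar>2*x - s\<bar> \<in> W" unfolding T_def W_def by auto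
  qed
  then show ?thesis using W(2) unfolding Lg_def by simp
qed

lemma bad_core:
  fixes \<alpha> c C0 B :: real and s :: int
  assumes "1 < \<alpha>" "\<alpha> < 2" "0 < c" "c < 1" "0 < C0"
  defines "T \<equiv> {x::int. \<bar>phi \<alpha> (of_int \<bar>s\<bar>) (of_int \<bar>2*x - s\<bar>) - B\<bar> \<le> C0 \<and>
                  of_int \<bar>2*x - s\<bar> < c * of_int \<bar>s\<bar>}"
  shows "finite T \<and> real (card T) \<le> (4*sqrt (4*(2*C0)/(\<alpha>*(\<alpha>-1))) + 2) * (\<bar>real_of_int s\<bar> powr (1 - \<alpha>/2) + 1)"
proof -
  define Kb where "Kb = sqrt (4*(2*C0)/(\<alpha>*(\<alpha>-1)))"
  define S where "S = real_of_int \<bar>s\<bar>"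
  define Lb where "Lb = Kb * S powr (1 - \<alpha>/2)"
  define W where "W = {w::int. 0 \<le> w \<and> \<bar>phi \<alpha> (of_int \<bar>s\<bar>) (of_int w) - B\<bar> \<le> C0 \<and>
                  of_int w < c * of_int \<bar>s\<bar>}"
  have S0: "0 \<le> S" unfolding S_def by simp
  have K0: "0 \<le> Kb" unfolding Kb_def using assms by simp
  have diam: "real_of_int (b - a) \<le> Lb" if ab: "a \<in> W" "b \<in> W" "a \<le> b" for a b
  proof -
    define u where "u = real_of_int a"
    define u' where "u' = real_of_int b"
    have aW: "0 \<le> u" "\<bar>phi \<alpha> S u - B\<bar> \<le> C0"
      using ab(1) unfolding W_def u_def S_def by simp_all
    have bW: "\<bar>phi \<alpha> S u' - B\<bar> \<le> C0" "u' < c*S"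
      using ab(2) unfolding W_def u'_def S_def by simp_all
    have u0: "0 \<le> u" "u \<le> u'" "u' < c*S" using aW bW ab(3) unfolding u_def u'_def by simp_all
    have ph: "phi \<alpha> S u' - phi \<alpha> S u \<le> 2*C0" using aW(2) bW(1) by (simp add: abs_le_iff)
    have "0 < c*S" using u0 by linarith
    then have Sp: "0 < S" using assms(3) by (simp add: zero_less_mult_iff)
    have "c * S \<le> S" using assms S0 by (simp add: mult_left_le_one_le)
    then have "u' \<le> S" using u0 by simp
    then have "u' - u \<le> Lb"
      using bad_bound[OF assms(1,2) Sp u0(1,2) _ _ ph] assms unfolding Lb_def Kb_def by simp
    then show ?thesis unfolding u_def u'_def by simp
  qed
  have L0: "0 \<le> Lb" unfolding Lb_def using K0 by simp
  from card_diam[OF diam L0] have W: "finite W" "real (card W) \<le> 2*Lb+1" by auto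
  have "finite T \<and> card T \<le> 2 * card W"
  proof (rule card_preimage[OF W(1)])
    fix x assume "x \<in> T" then show "\<bar>2*x - s\<bar> \<in> W" unfolding T_def W_def by auto
  qed
  then have "finite T" "real (card T) \<le> 4*Kb*S powr (1-\<alpha>/2) + 2" using W(2) unfolding Lb_def by auto
  moreover have "4*Kb*S powr (1-\<alpha>/2) + 2 \<le> (4*Kb + 2) * (S powr (1-\<alpha>/2) + 1)"
    using K0 by (simp add: algebra_simps)
  ultimately show ?thesis unfolding Kb_def S_def by simp
qed


lemma card_via_fst:
  assumes "finite T" "fst ` A \<subseteq> T" "inj_on fst A"
  shows "card A \<le> card T"
proof -
  have "card A = card (fst ` A)" using assms(3) by (simp add: card_image)
  also have "\<dots> \<le> card T" using assms(1,2) by (rule card_mono)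
  finally show ?thesis .
qed

lemma phase_kk2:
  fixes \<alpha> m C0 :: real and k k1 k2 k3 :: int
  assumes "(k,k1,k2,k3) \<in> Sset \<alpha> m C0 N N1 N2 N3"
  shows "k3 = k + k2 - k1 \<and> \<bar>phi \<alpha> (of_int \<bar>k+k2\<bar>) (of_int \<bar>2*k1 - (k+k2)\<bar>)
           - (\<bar>real_of_int k\<bar> powr \<alpha> + \<bar>real_of_int k2\<bar> powr \<alpha> + m)\<bar> \<le> C0"
proof -
  have eq: "k = k1 - k2 + k3" and ph: "\<bar>\<bar>real_of_int k1\<bar> powr \<alpha> - \<bar>real_of_int k2\<bar> powr \<alpha> + \<bar>real_of_int k3\<bar> powr \<alpha>
        - \<bar>real_of_int k\<bar> powr \<alpha> - m\<bar> \<le> C0"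
    using assms unfolding Sset_def by auto
  have r3: "real_of_int k3 = real_of_int (k+k2) - real_of_int k1" using eq by simp
  have "phi \<alpha> (of_int \<bar>k+k2\<bar>) (of_int \<bar>2*k1 - (k+k2)\<bar>)
        = phi \<alpha> \<bar>real_of_int (k+k2)\<bar> \<bar>2*real_of_int k1 - real_of_int (k+k2)\<bar>"
    by simp
  also have "\<dots> = \<bar>real_of_int k1\<bar> powr \<alpha> + \<bar>real_of_int k3\<bar> powr \<alpha>"
    using phi_id[of "real_of_int k1" \<alpha> "real_of_int (k+k2)"] r3 by simp
  finally have "phi \<alpha> (of_int \<bar>k+k2\<bar>) (of_int \<bar>2*k1 - (k+k2)\<bar>) = \<bar>real_of_int k1\<bar> powr \<alpha> + \<bar>real_of_int k3\<bar> powr \<alpha>" .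
  then show ?thesis using ph eq by (simp add: abs_le_iff)
qed

lemma phase_k1k3:
  fixes \<alpha> m C0 :: real and k k1 k2 k3 :: int
  assumes "(k,k1,k2,k3) \<in> Sset \<alpha> m C0 N N1 N2 N3"
  shows "k2 = k1 + k3 - k \<and> \<bar>phi \<alpha> (of_int \<bar>k1+k3\<bar>) (of_int \<bar>2*k - (k1+k3)\<bar>)
           - (\<bar>real_of_int k1\<bar> powr \<alpha> + \<bar>real_of_int k3\<bar> powr \<alpha> - m)\<bar> \<le> C0"
proof -
  have eq: "k = k1 - k2 + k3" and ph: "\<bar>\<bar>real_of_int k1\<bar> powr \<alpha> - \<bar>real_of_int k2\<bar> powr \<alpha> + \<bar>real_of_int k3\<bar> powr \<alpha>
        - \<bar>real_of_int k\<bar> powr \<alpha> - m\<bar> \<le> C0"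
    using assms unfolding Sset_def by auto
  have r2: "real_of_int k2 = real_of_int (k1+k3) - real_of_int k" using eq by simp
  have "phi \<alpha> (of_int \<bar>k1+k3\<bar>) (of_int \<bar>2*k - (k1+k3)\<bar>)
        = phi \<alpha> \<bar>real_of_int (k1+k3)\<bar> \<bar>2*real_of_int k - real_of_int (k1+k3)\<bar>"
    by simp
  also have "\<dots> = \<bar>real_of_int k\<bar> powr \<alpha> + \<bar>real_of_int k2\<bar> powr \<alpha>"
    using phi_id[of "real_of_int k" \<alpha> "real_of_int (k1+k3)"] r2 by simp
  finally have "phi \<alpha> (of_int \<bar>k1+k3\<bar>) (of_int \<bar>2*k - (k1+k3)\<bar>) = \<bar>real_of_int k\<bar> powr \<alpha> + \<bar>real_of_int k2\<bar> powr \<alpha>" .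
  then show ?thesis using ph eq by (simp add: abs_le_iff)
qed

theorem lemma2p7:
  fixes \<alpha> c C0 :: real
  assumes "1 < \<alpha>" "\<alpha> < 2" "0 < c" "c < 1" "0 < C0"
  shows "\<exists>C::real. \<forall>(N::nat) N1 N2 N3 (m::real).
    dyadic N \<and> dyadic N1 \<and> dyadic N2 \<and> dyadic N3 \<and> N1 \<le> N \<and> N2 \<le> N \<and> N3 \<le> N \<longrightarrow>
    (\<forall>k k2. real (card (S_kk2_good \<alpha> c m C0 N N1 N2 N3 k k2)) \<le> C) \<and>
    (\<forall>k1 k3. real (card (S_k1k3_good \<alpha> c m C0 N N1 N2 N3 k1 k3)) \<le> C) \<and>
    (\<forall>k k2. real (card (S_kk2_bad \<alpha> c m C0 N N1 N2 N3 k k2))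
        \<le> C * (\<bar>real_of_int (k + k2)\<bar> powr (1 - \<alpha>/2) + 1)) \<and>
    (\<forall>k1 k3. real (card (S_k1k3_bad \<alpha> c m C0 N N1 N2 N3 k1 k3))
        \<le> C * (\<bar>real_of_int (k1 + k3)\<bar> powr (1 - \<alpha>/2) + 1))"
proof -
  define Cg where "Cg = 2*(2*(4*C0/(\<alpha>*(\<alpha>-1)*c) + 4*C0 + 2) + 1)"
  define Cb where "Cb = 4*sqrt (4*(2*C0)/(\<alpha>*(\<alpha>-1))) + 2"
  define C where "C = max Cg Cb"
  have CgC: "Cg \<le> C" and CbC: "Cb \<le> C" unfolding C_def by auto
  have G1: "real (card (S_kk2_good \<alpha> c m C0 N N1 N2 N3 k k2)) \<le> C" for N N1 N2 N3 m k k2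
  proof -
    define T where "T = {x::int. \<bar>phi \<alpha> (of_int \<bar>k+k2\<bar>) (of_int \<bar>2*x - (k+k2)\<bar>)
           - (\<bar>real_of_int k\<bar> powr \<alpha> + \<bar>real_of_int k2\<bar> powr \<alpha> + m)\<bar> \<le> C0 \<and>
                  c * of_int \<bar>k+k2\<bar> \<le> of_int \<bar>2*x - (k+k2)\<bar>}"
    have core: "finite T \<and> real (card T) \<le> Cg" unfolding T_def Cg_def
      by (rule good_core[OF assms(1-3,5)])
    have "card (S_kk2_good \<alpha> c m C0 N N1 N2 N3 k k2) \<le> card T"
    proof (rule card_via_fst)
      show "finite T" using core by simp
      show "fst ` S_kk2_good \<alpha> c m C0 N N1 N2 N3 k k2 \<subseteq> T"
      proof
        fix x assume "x \<in> fst ` S_kk2_good \<alpha> c m C0 N N1 N2 N3 k k2"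
        then obtain k3 where p: "(x,k3) \<in> S_kk2_good \<alpha> c m C0 N N1 N2 N3 k k2" by auto
        have mem: "(k,x,k2,k3) \<in> Sset \<alpha> m C0 N N1 N2 N3" using p unfolding S_kk2_good_def S_kk2_bad_def S_kk2_def by simp
        have gd: "\<not> (real_of_int \<bar>2*x - (k+k2)\<bar> < c * real_of_int \<bar>k+k2\<bar>)" using p unfolding S_kk2_good_def S_kk2_bad_def S_kk2_def by simp
        show "x \<in> T" using phase_kk2[OF mem] gd unfolding T_def by simp
      qed
      show "inj_on fst (S_kk2_good \<alpha> c m C0 N N1 N2 N3 k k2)"
      proof (rule inj_onI)
        fix p q assume "p \<in> S_kk2_good \<alpha> c m C0 N N1 N2 N3 k k2" "q \<in> S_kk2_good \<alpha> c m C0 N N1 N2 N3 k k2" "fst p = fst q"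
        then have pq: "p \<in> S_kk2_good \<alpha> c m C0 N N1 N2 N3 k k2" "q \<in> S_kk2_good \<alpha> c m C0 N N1 N2 N3 k k2" "fst p = fst q" by blast+
        obtain a b where pe: "p = (a,b)" by fastforce
        obtain a' b' where qe: "q = (a',b')" by fastforce
        have "(k,a,k2,b) \<in> Sset \<alpha> m C0 N N1 N2 N3" using pq(1) pe unfolding S_kk2_good_def S_kk2_bad_def S_kk2_def by simp
        then have e1: "b = k+k2-a" using phase_kk2 by blast
        have "(k,a',k2,b') \<in> Sset \<alpha> m C0 N N1 N2 N3" using pq(2) qe unfolding S_kk2_good_def S_kk2_bad_def S_kk2_def by simp
        then have e2: "b' = k+k2-a'" using phase_kk2 by blast
        show "p = q" using pe qe e1 e2 pq(3) by simp
      qed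
    qed
    then show ?thesis using core CgC by linarith
  qed
  have G2: "real (card (S_k1k3_good \<alpha> c m C0 N N1 N2 N3 k1 k3)) \<le> C" for N N1 N2 N3 m k1 k3
  proof -
    define T where "T = {x::int. \<bar>phi \<alpha> (of_int \<bar>k1+k3\<bar>) (of_int \<bar>2*x - (k1+k3)\<bar>)
           - (\<bar>real_of_int k1\<bar> powr \<alpha> + \<bar>real_of_int k3\<bar> powr \<alpha> - m)\<bar> \<le> C0 \<and>
                  c * of_int \<bar>k1+k3\<bar> \<le> of_int \<bar>2*x - (k1+k3)\<bar>}"
    have core: "finite T \<and> real (card T) \<le> Cg" unfolding T_def Cg_def
      by (rule good_core[OF assms(1-3,5)])
    have "card (S_k1k3_good \<alpha> c m C0 N N1 N2 N3 k1 k3) \<le> card T"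
    proof (rule card_via_fst)
      show "finite T" using core by simp
      show "fst ` S_k1k3_good \<alpha> c m C0 N N1 N2 N3 k1 k3 \<subseteq> T"
      proof
        fix x assume "x \<in> fst ` S_k1k3_good \<alpha> c m C0 N N1 N2 N3 k1 k3"
        then obtain k2 where p: "(x,k2) \<in> S_k1k3_good \<alpha> c m C0 N N1 N2 N3 k1 k3" by auto
        have mem: "(x,k1,k2,k3) \<in> Sset \<alpha> m C0 N N1 N2 N3" using p unfolding S_k1k3_good_def S_k1k3_bad_def S_k1k3_def by simp
        have gd: "\<not> (real_of_int \<bar>2*x - (k1+k3)\<bar> < c * real_of_int \<bar>k1+k3\<bar>)" using p unfolding S_k1k3_good_def S_k1k3_bad_def S_k1k3_def by simp
        show "x \<in> T" using phase_k1k3[OF mem] gd unfolding T_def by simp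
      qed
      show "inj_on fst (S_k1k3_good \<alpha> c m C0 N N1 N2 N3 k1 k3)"
      proof (rule inj_onI)
        fix p q assume "p \<in> S_k1k3_good \<alpha> c m C0 N N1 N2 N3 k1 k3" "q \<in> S_k1k3_good \<alpha> c m C0 N N1 N2 N3 k1 k3" "fst p = fst q"
        then have pq: "p \<in> S_k1k3_good \<alpha> c m C0 N N1 N2 N3 k1 k3" "q \<in> S_k1k3_good \<alpha> c m C0 N N1 N2 N3 k1 k3" "fst p = fst q" by blast+
        obtain a b where pe: "p = (a,b)" by fastforce
        obtain a' b' where qe: "q = (a',b')" by fastforce
        have "(a,k1,b,k3) \<in> Sset \<alpha> m C0 N N1 N2 N3" using pq(1) pe unfolding S_k1k3_good_def S_k1k3_bad_def S_k1k3_def by simp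
        then have e1: "b = k1+k3-a" using phase_k1k3 by blast
        have "(a',k1,b',k3) \<in> Sset \<alpha> m C0 N N1 N2 N3" using pq(2) qe unfolding S_k1k3_good_def S_k1k3_bad_def S_k1k3_def by simp
        then have e2: "b' = k1+k3-a'" using phase_k1k3 by blast
        show "p = q" using pe qe e1 e2 pq(3) by simp
      qed
    qed
    then show ?thesis using core CgC by linarith
  qed
  have B1: "real (card (S_kk2_bad \<alpha> c m C0 N N1 N2 N3 k k2)) \<le> C * (\<bar>real_of_int (k + k2)\<bar> powr (1 - \<alpha>/2) + 1)" for N N1 N2 N3 m k k2
  proof -
    define T where "T = {x::int. \<bar>phi \<alpha> (of_int \<bar>k+k2\<bar>) (of_int \<bar>2*x - (k+k2)\<bar>)
           - (\<bar>real_of_int k\<bar> powr \<alpha> + \<bar>real_of_int k2\<bar> powr \<alpha> + m)\<bar> \<le> C0 \<and>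
                  of_int \<bar>2*x - (k+k2)\<bar> < c * of_int \<bar>k+k2\<bar>}"
    have core: "finite T \<and> real (card T) \<le> Cb * (\<bar>real_of_int (k + k2)\<bar> powr (1 - \<alpha>/2) + 1)" unfolding T_def Cb_def
      by (rule bad_core[OF assms(1-5)])
    have "card (S_kk2_bad \<alpha> c m C0 N N1 N2 N3 k k2) \<le> card T"
    proof (rule card_via_fst)
      show "finite T" using core by simp
      show "fst ` S_kk2_bad \<alpha> c m C0 N N1 N2 N3 k k2 \<subseteq> T"
      proof
        fix x assume "x \<in> fst ` S_kk2_bad \<alpha> c m C0 N N1 N2 N3 k k2"
        then obtain k3 where p: "(x,k3) \<in> S_kk2_bad \<alpha> c m C0 N N1 N2 N3 k k2" by auto
        have mem: "(k,x,k2,k3) \<in> Sset \<alpha> m C0 N N1 N2 N3" using p unfolding S_kk2_bad_def S_kk2_def by simp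
        have gd: "real_of_int \<bar>2*x - (k+k2)\<bar> < c * real_of_int \<bar>k+k2\<bar>" using p unfolding S_kk2_bad_def S_kk2_def by simp
        show "x \<in> T" using phase_kk2[OF mem] gd unfolding T_def by simp
      qed
      show "inj_on fst (S_kk2_bad \<alpha> c m C0 N N1 N2 N3 k k2)"
      proof (rule inj_onI)
        fix p q assume "p \<in> S_kk2_bad \<alpha> c m C0 N N1 N2 N3 k k2" "q \<in> S_kk2_bad \<alpha> c m C0 N N1 N2 N3 k k2" "fst p = fst q"
        then have pq: "p \<in> S_kk2_bad \<alpha> c m C0 N N1 N2 N3 k k2" "q \<in> S_kk2_bad \<alpha> c m C0 N N1 N2 N3 k k2" "fst p = fst q" by blast+
        obtain a b where pe: "p = (a,b)" by fastforce
        obtain a' b' where qe: "q = (a',b')" by fastforce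
        have "(k,a,k2,b) \<in> Sset \<alpha> m C0 N N1 N2 N3" using pq(1) pe unfolding S_kk2_bad_def S_kk2_def by simp
        then have e1: "b = k+k2-a" using phase_kk2 by blast
        have "(k,a',k2,b') \<in> Sset \<alpha> m C0 N N1 N2 N3" using pq(2) qe unfolding S_kk2_bad_def S_kk2_def by simp
        then have e2: "b' = k+k2-a'" using phase_kk2 by blast
        show "p = q" using pe qe e1 e2 pq(3) by simp
      qed
    qed
    moreover have "Cb * (\<bar>real_of_int (k + k2)\<bar> powr (1 - \<alpha>/2) + 1) \<le> C * (\<bar>real_of_int (k + k2)\<bar> powr (1 - \<alpha>/2) + 1)"
      using CbC by (intro mult_right_mono) auto
    ultimately show ?thesis using core by linarith
  qed
  have B2: "real (card (S_k1k3_bad \<alpha> c m C0 N N1 N2 N3 k1 k3)) \<le> C * (\<bar>real_of_int (k1 + k3)\<bar> powr (1 - \<alpha>/2) + 1)" for N N1 N2 N3 m k1 k3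
  proof -
    define T where "T = {x::int. \<bar>phi \<alpha> (of_int \<bar>k1+k3\<bar>) (of_int \<bar>2*x - (k1+k3)\<bar>)
           - (\<bar>real_of_int k1\<bar> powr \<alpha> + \<bar>real_of_int k3\<bar> powr \<alpha> - m)\<bar> \<le> C0 \<and>
                  of_int \<bar>2*x - (k1+k3)\<bar> < c * of_int \<bar>k1+k3\<bar>}"
    have core: "finite T \<and> real (card T) \<le> Cb * (\<bar>real_of_int (k1 + k3)\<bar> powr (1 - \<alpha>/2) + 1)" unfolding T_def Cb_def
      by (rule bad_core[OF assms(1-5)])
    have "card (S_k1k3_bad \<alpha> c m C0 N N1 N2 N3 k1 k3) \<le> card T"
    proof (rule card_via_fst)
      show "finite T" using core by simp
      show "fst ` S_k1k3_bad \<alpha> c m C0 N N1 N2 N3 k1 k3 \<subseteq> T"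
      proof
        fix x assume "x \<in> fst ` S_k1k3_bad \<alpha> c m C0 N N1 N2 N3 k1 k3"
        then obtain k2 where p: "(x,k2) \<in> S_k1k3_bad \<alpha> c m C0 N N1 N2 N3 k1 k3" by auto
        have mem: "(x,k1,k2,k3) \<in> Sset \<alpha> m C0 N N1 N2 N3" using p unfolding S_k1k3_bad_def S_k1k3_def by simp
        have gd: "real_of_int \<bar>2*x - (k1+k3)\<bar> < c * real_of_int \<bar>k1+k3\<bar>" using p unfolding S_k1k3_bad_def S_k1k3_def by simp
        show "x \<in> T" using phase_k1k3[OF mem] gd unfolding T_def by simp
      qed
      show "inj_on fst (S_k1k3_bad \<alpha> c m C0 N N1 N2 N3 k1 k3)"
      proof (rule inj_onI)
        fix p q assume "p \<in> S_k1k3_bad \<alpha> c m C0 N N1 N2 N3 k1 k3" "q \<in> S_k1k3_bad \<alpha> c m C0 N N1 N2 N3 k1 k3" "fst p = fst q"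
        then have pq: "p \<in> S_k1k3_bad \<alpha> c m C0 N N1 N2 N3 k1 k3" "q \<in> S_k1k3_bad \<alpha> c m C0 N N1 N2 N3 k1 k3" "fst p = fst q" by blast+
        obtain a b where pe: "p = (a,b)" by fastforce
        obtain a' b' where qe: "q = (a',b')" by fastforce
        have "(a,k1,b,k3) \<in> Sset \<alpha> m C0 N N1 N2 N3" using pq(1) pe unfolding S_k1k3_bad_def S_k1k3_def by simp
        then have e1: "b = k1+k3-a" using phase_k1k3 by blast
        have "(a',k1,b',k3) \<in> Sset \<alpha> m C0 N N1 N2 N3" using pq(2) qe unfolding S_k1k3_bad_def S_k1k3_def by simp
        then have e2: "b' = k1+k3-a'" using phase_k1k3 by blast
        show "p = q" using pe qe e1 e2 pq(3) by simp
      qed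
    qed
    moreover have "Cb * (\<bar>real_of_int (k1 + k3)\<bar> powr (1 - \<alpha>/2) + 1) \<le> C * (\<bar>real_of_int (k1 + k3)\<bar> powr (1 - \<alpha>/2) + 1)"
      using CbC by (intro mult_right_mono) auto
    ultimately show ?thesis using core by linarith
  qed
  show ?thesis by (rule exI[of _ C]) (intro allI impI conjI G1 G2 B1 B2)
qed

end
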